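(* Let $\mathcal P$ be an energy timed path, $E$ a closed interval with rational bounds, and $\mathcal R=\mathcal R^E_{\mathcal P}$ the associated energy function. For every decreasing sequence $(I_j)_{j\in\mathbb N}$ of intervals in $\mathcal I(E)$ (i.e. $I_j\supseteq I_{j+1}$ for all $j$), $$\mathcal R^{-1}\Big(\bigcap_{j\in\mathbb N} I_j\Big)=\bigcap_{j\in\mathbb N}\mathcal R^{-1}(I_j)\qquad\text{and}\qquad \mathcal R\Big(\bigcap_{j\in\mathbb N} I_j\Big)=\bigcap_{j\in\mathbb N}\mathcal R(I_j).$$
   Context: An energy timed automaton (ETA) is a tuple $\langle S,S_0,X,\mathrm{Inv},r,T\rangle$ where $S$ is a finite set of states, $S_0\subseteq S$ the initial states, $X$ a finite set of clocks, $\mathrm{Inv}$ assigns to each state an invariant which is a conjunction of closed (non-strict) clock constraints $x\bowtie c$ with $\bowtie\in\{\le,\ge,=\}$ and $c$ rational, $r\colon S\to\mathbb Q$ assigns an energy rate to each state, and $T$ is a finite set of transitions $(s,g,u,z,s')$ with $g$ a closed clock constraint (guard), $u\in\mathbb Q$ an energy update, and $z\subseteq X$ a set of clocks to reset. Given transitions $t_i=(s_i,g_i,u_i,z_i,s_{i+1})$, $0\le i<n$, a finite run is a sequence of configurations $(\ell_j,v_j,w_j)_{0\le j\le 2n}$ (state, clock valuation, energy level) for which there exist delays $d_i\ge 0$ with: $\ell_{2j}=\ell_{2j+1}=s_j$, $\ell_{2n}=s_n$; $v_{2j+1}=v_{2j}+d_j$ and $v_{2j+2}=v_{2j+1}[z_j\to0]$;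 $v_{2j}\models\mathrm{Inv}(s_j)$ and $v_{2j+1}\models \mathrm{Inv}(s_j)\wedge g_j$; $w_{2j+1}=w_{2j}+d_j\,r(s_j)$ and $w_{2j+2}=w_{2j+1}+u_j$. An energy constraint is a closed interval $E$ with rational bounds; a run satisfies $E$ if all its energy levels $w_j$ lie in $E$. $\mathcal I(E)$ denotes the set of closed subintervals of $E$ (including $\emptyset$). An energy timed path (ETP) from $s_0$ to $s_n$ is an ETA with states $s_0,\dots,s_n$, initial state $s_0$, and exactly one transition from $s_i$ to $s_{i+1}$ for each $0\le i<n$ (and no other transitions). The binary energy relation $\mathcal R^E_{\mathcal P}\subseteq E\times E$ of an ETP $\mathcal P$ holds for $(w_0,w_1)$ iff there is a finite run of $\mathcal P$ from $(s_0,\mathbf 0,w_0)$ to $(s_n,\mathbf 0,w_1)$ satisfying $E$ ($\mathbf 0$ the all-zero valuation). The associated energy function maps $I\in\mathcal I(E)$ to $\mathcal R(I)=\{w_1\in E\mid\exists w_0\in I.\ \mathcal R(w_0,w_1)\}$, and $\mathcal R^{-1}(I)=\{w_0\in E\mid \exists w_1\in I.\ \mathcal R(w_0,w_1)\}$. *)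

theory Defs
  imports Main "HOL.Real"
begin

datatype cmp = CLe | CGe | CEq

type_synonym 'c constr = "'c \<times> cmp \<times> rat"

type_synonym 'c valuation = "'c \<Rightarrow> real"

fun sat_atom :: "'c valuation \<Rightarrow> 'c constr \<Rightarrow> bool" where
  "sat_atom v (x, CLe, c) = (v x \<le> real_of_rat c)"
| "sat_atom v (x, CGe, c) = (v x \<ge> real_of_rat c)"
| "sat_atom v (x, CEq, c) = (v x = real_of_rat c)"

definition sat :: "'c valuation \<Rightarrow> 'c constr list \<Rightarrow> bool" where
  "sat v gs \<longleftrightarrow> (\<forall>a\<in>set gs. sat_atom v a)"

definition constr_clocks :: "'c constr list \<Rightarrow> 'c set" where
  "constr_clocks gs = fst ` set gs"

type_synonym ('s, 'c) tr = "'s \<times> 'c constr list \<times> rat \<times> 'c set \<times> 's"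

definition tr_src :: "('s, 'c) tr \<Rightarrow> 's" where "tr_src t = fst t"
definition tr_guard :: "('s, 'c) tr \<Rightarrow> 'c constr list" where "tr_guard t = fst (snd t)"
definition tr_upd :: "('s, 'c) tr \<Rightarrow> rat" where "tr_upd t = fst (snd (snd t))"
definition tr_reset :: "('s, 'c) tr \<Rightarrow> 'c set" where "tr_reset t = fst (snd (snd (snd t)))"
definition tr_tgt :: "('s, 'c) tr \<Rightarrow> 's" where "tr_tgt t = snd (snd (snd (snd t)))"

record ('s, 'c) eta =
  states :: "'s set"
  init :: "'s set"
  clocks :: "'c set"
  inv :: "'s \<Rightarrow> 'c constr list"
  rate :: "'s \<Rightarrow> rat"
  trans :: "('s, 'c) tr set"

definition wf_eta :: "('s, 'c) eta \<Rightarrow> bool" where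
  "wf_eta A \<longleftrightarrow> finite (states A) \<and> init A \<subseteq> states A \<and> finite (clocks A)
     \<and> (\<forall>s\<in>states A. constr_clocks (inv A s) \<subseteq> clocks A)
     \<and> finite (trans A)
     \<and> (\<forall>t\<in>trans A. tr_src t \<in> states A \<and> tr_tgt t \<in> states A
            \<and> constr_clocks (tr_guard t) \<subseteq> clocks A \<and> tr_reset t \<subseteq> clocks A)"

definition is_ETP :: "('s, 'c) eta \<Rightarrow> 's list \<Rightarrow> bool" where
  "is_ETP A ss \<longleftrightarrow> wf_eta A \<and> ss \<noteq> [] \<and> distinct ss
     \<and> states A = set ss \<and> init A = {hd ss}
     \<and> (\<forall>i. Suc i < length ss \<longrightarrow>
            (\<exists>!t. t \<in> trans A \<and> tr_src t = ss ! i \<and> tr_tgt t = ss ! Suc i))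
     \<and> (\<forall>t\<in>trans A. \<exists>i. Suc i < length ss \<and> tr_src t = ss ! i \<and> tr_tgt t = ss ! Suc i)"

type_synonym ('s, 'c) config = "'s \<times> 'c valuation \<times> real"

definition loc :: "('s, 'c) config \<Rightarrow> 's" where "loc c = fst c"
definition val :: "('s, 'c) config \<Rightarrow> 'c valuation" where "val c = fst (snd c)"
definition en :: "('s, 'c) config \<Rightarrow> real" where "en c = snd (snd c)"

definition is_run :: "('s, 'c) eta \<Rightarrow> ('s, 'c) tr list \<Rightarrow> ('s, 'c) config list \<Rightarrow> bool" where
  "is_run A ts cs \<longleftrightarrow> length cs = 2 * length ts + 1 \<and>
     (\<forall>j < length ts. ts ! j \<in> trans A \<and>
        (\<exists>d::real. d \<ge> 0 \<and>
           loc (cs ! (2*j)) = tr_src (ts ! j) \<and>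
           loc (cs ! (2*j+1)) = tr_src (ts ! j) \<and>
           loc (cs ! (2*j+2)) = tr_tgt (ts ! j) \<and>
           val (cs ! (2*j+1)) = (\<lambda>x. val (cs ! (2*j)) x + d) \<and>
           val (cs ! (2*j+2)) = (\<lambda>x. if x \<in> tr_reset (ts ! j) then 0 else val (cs ! (2*j+1)) x) \<and>
           sat (val (cs ! (2*j))) (inv A (tr_src (ts ! j))) \<and>
           sat (val (cs ! (2*j+1))) (inv A (tr_src (ts ! j))) \<and>
           sat (val (cs ! (2*j+1))) (tr_guard (ts ! j)) \<and>
           en (cs ! (2*j+1)) = en (cs ! (2*j)) + d * real_of_rat (rate A (tr_src (ts ! j))) \<and>
           en (cs ! (2*j+2)) = en (cs ! (2*j+1)) + real_of_rat (tr_upd (ts ! j))))"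

definition run_satisfies :: "('s, 'c) config list \<Rightarrow> real set \<Rightarrow> bool" where
  "run_satisfies cs E \<longleftrightarrow> (\<forall>c\<in>set cs. en c \<in> E)"

definition energy_rel :: "('s, 'c) eta \<Rightarrow> 's list \<Rightarrow> real set \<Rightarrow> real \<Rightarrow> real \<Rightarrow> bool" where
  "energy_rel A ss E w0 w1 \<longleftrightarrow> w0 \<in> E \<and> w1 \<in> E \<and>
     (\<exists>ts cs. is_run A ts cs \<and> run_satisfies cs E
        \<and> hd cs = (hd ss, (\<lambda>_. 0), w0) \<and> last cs = (last ss, (\<lambda>_. 0), w1))"

definition energy_img :: "('s, 'c) eta \<Rightarrow> 's list \<Rightarrow> real set \<Rightarrow> real set \<Rightarrow> real set" where
  "energy_img A ss E I = {w1 \<in> E. \<exists>w0\<in>I. energy_rel A ss E w0 w1}"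

definition energy_preimg :: "('s, 'c) eta \<Rightarrow> 's list \<Rightarrow> real set \<Rightarrow> real set \<Rightarrow> real set" where
  "energy_preimg A ss E I = {w0 \<in> E. \<exists>w1\<in>I. energy_rel A ss E w0 w1}"

text \<open>I(E): closed subintervals of E (including the empty set).\<close>
definition closed_subintervals :: "real set \<Rightarrow> real set set" where
  "closed_subintervals E = {I. I \<subseteq> E \<and> (\<exists>l u. I = {l..u})}"

end

theory Submission imports Defs "HOL-Analysis.Analysis" begin


fun VV :: "('s,'c) tr list \<Rightarrow> (nat \<Rightarrow> real) \<Rightarrow> nat \<Rightarrow> 'c valuation" where
  "VV ts d 0 = (\<lambda>_. 0)"
| "VV ts d (Suc j) = (\<lambda>x. if x \<in> tr_reset (ts!j) then 0 else VV ts d j x + d j)"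

definition rr :: "('s,'c) eta \<Rightarrow> ('s,'c) tr list \<Rightarrow> nat \<Rightarrow> real" where
  "rr A ts j = real_of_rat (rate A (tr_src (ts!j)))"

definition uu :: "('s,'c) tr list \<Rightarrow> nat \<Rightarrow> real" where
  "uu ts j = real_of_rat (tr_upd (ts!j))"

fun WW :: "('s,'c) eta \<Rightarrow> ('s,'c) tr list \<Rightarrow> real \<Rightarrow> (nat \<Rightarrow> real) \<Rightarrow> nat \<Rightarrow> real" where
  "WW A ts w0 d 0 = w0"
| "WW A ts w0 d (Suc j) = WW A ts w0 d j + d j * rr A ts j + uu ts j"

definition Good :: "('s,'c) eta \<Rightarrow> ('s,'c) tr list \<Rightarrow> real set \<Rightarrow> real \<Rightarrow> (nat \<Rightarrow> real) \<Rightarrow> bool" where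
  "Good A ts E w0 d \<longleftrightarrow> (\<forall>j<length ts. d j \<ge> 0
      \<and> sat (VV ts d j) (inv A (tr_src (ts!j)))
      \<and> sat (\<lambda>x. VV ts d j x + d j) (inv A (tr_src (ts!j)))
      \<and> sat (\<lambda>x. VV ts d j x + d j) (tr_guard (ts!j))
      \<and> WW A ts w0 d j \<in> E \<and> WW A ts w0 d j + d j * rr A ts j \<in> E)
    \<and> WW A ts w0 d (length ts) \<in> E \<and> VV ts d (length ts) = (\<lambda>_. 0)"

lemma extract_good:
  assumes run: "is_run A ts cs" and rs: "run_satisfies cs E"
    and h: "hd cs = (s0, (\<lambda>_. 0), w0)" and l: "last cs = (sl, (\<lambda>_. 0), w1)"
  shows "\<exists>d. Good A ts E w0 d \<and> WW A ts w0 d (length ts) = w1"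
proof -
  let ?m = "length ts"
  have len: "length cs = 2 * ?m + 1" using run unfolding is_run_def by simp
  have "\<forall>j\<in>{..<?m}. \<exists>d::real. d \<ge> 0 \<and>
           val (cs ! (2*j+1)) = (\<lambda>x. val (cs ! (2*j)) x + d) \<and>
           val (cs ! (2*j+2)) = (\<lambda>x. if x \<in> tr_reset (ts ! j) then 0 else val (cs ! (2*j+1)) x) \<and>
           sat (val (cs ! (2*j))) (inv A (tr_src (ts ! j))) \<and>
           sat (val (cs ! (2*j+1))) (inv A (tr_src (ts ! j))) \<and>
           sat (val (cs ! (2*j+1))) (tr_guard (ts ! j)) \<and>
           en (cs ! (2*j+1)) = en (cs ! (2*j)) + d * real_of_rat (rate A (tr_src (ts ! j))) \<and>
           en (cs ! (2*j+2)) = en (cs ! (2*j+1)) + real_of_rat (tr_upd (ts ! j))"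
    using run unfolding is_run_def by auto
  then have "\<exists>d. \<forall>j\<in>{..<?m}. d j \<ge> 0 \<and>
           val (cs ! (2*j+1)) = (\<lambda>x. val (cs ! (2*j)) x + d j) \<and>
           val (cs ! (2*j+2)) = (\<lambda>x. if x \<in> tr_reset (ts ! j) then 0 else val (cs ! (2*j+1)) x) \<and>
           sat (val (cs ! (2*j))) (inv A (tr_src (ts ! j))) \<and>
           sat (val (cs ! (2*j+1))) (inv A (tr_src (ts ! j))) \<and>
           sat (val (cs ! (2*j+1))) (tr_guard (ts ! j)) \<and>
           en (cs ! (2*j+1)) = en (cs ! (2*j)) + d j * real_of_rat (rate A (tr_src (ts ! j))) \<and>
           en (cs ! (2*j+2)) = en (cs ! (2*j+1)) + real_of_rat (tr_upd (ts ! j))" by (rule bchoice)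
  then obtain d where dd: "\<forall>j\<in>{..<?m}. d j \<ge> 0 \<and>
           val (cs ! (2*j+1)) = (\<lambda>x. val (cs ! (2*j)) x + d j) \<and>
           val (cs ! (2*j+2)) = (\<lambda>x. if x \<in> tr_reset (ts ! j) then 0 else val (cs ! (2*j+1)) x) \<and>
           sat (val (cs ! (2*j))) (inv A (tr_src (ts ! j))) \<and>
           sat (val (cs ! (2*j+1))) (inv A (tr_src (ts ! j))) \<and>
           sat (val (cs ! (2*j+1))) (tr_guard (ts ! j)) \<and>
           en (cs ! (2*j+1)) = en (cs ! (2*j)) + d j * real_of_rat (rate A (tr_src (ts ! j))) \<and>
           en (cs ! (2*j+2)) = en (cs ! (2*j+1)) + real_of_rat (tr_upd (ts ! j))" by blast
  have d: "\<And>j. j < ?m \<Longrightarrow> d j \<ge> 0 \<and>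
           val (cs ! (2*j+1)) = (\<lambda>x. val (cs ! (2*j)) x + d j) \<and>
           val (cs ! (2*j+2)) = (\<lambda>x. if x \<in> tr_reset (ts ! j) then 0 else val (cs ! (2*j+1)) x) \<and>
           sat (val (cs ! (2*j))) (inv A (tr_src (ts ! j))) \<and>
           sat (val (cs ! (2*j+1))) (inv A (tr_src (ts ! j))) \<and>
           sat (val (cs ! (2*j+1))) (tr_guard (ts ! j)) \<and>
           en (cs ! (2*j+1)) = en (cs ! (2*j)) + d j * real_of_rat (rate A (tr_src (ts ! j))) \<and>
           en (cs ! (2*j+2)) = en (cs ! (2*j+1)) + real_of_rat (tr_upd (ts ! j))" using dd lessThan_iff by blast
  have cs0: "cs ! 0 = hd cs" using len by (cases cs) auto
  have IH: "j \<le> ?m \<Longrightarrow> val (cs ! (2*j)) = VV ts d j \<and> en (cs ! (2*j)) = WW A ts w0 d j" for j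
  proof (induction j)
    case 0
    then show ?case using cs0 h by (simp add: val_def en_def)
  next
    case (Suc j)
    then have "j < ?m" by simp
    from d[OF this] Suc show ?case by (auto simp: rr_def uu_def)
  qed
  have mem: "p < 2 * ?m + 1 \<Longrightarrow> en (cs ! p) \<in> E" for p
    using rs len unfolding run_satisfies_def by auto
  have lst: "cs ! (2 * ?m) = last cs" using len last_conv_nth[of cs] by (cases cs) auto
  have "Good A ts E w0 d"
    unfolding Good_def
  proof (intro conjI allI impI)
    fix j assume j: "j < ?m"
    note dj = d[OF j] and ij = IH[of j] 
    show "d j \<ge> 0" using dj by simp
    show "sat (VV ts d j) (inv A (tr_src (ts!j)))" using dj ij j by (auto)
    show "sat (\<lambda>x. VV ts d j x + d j) (inv A (tr_src (ts!j)))" using dj ij j by (auto)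
    show "sat (\<lambda>x. VV ts d j x + d j) (tr_guard (ts!j))" using dj ij j by (auto)
    show "WW A ts w0 d j \<in> E" using ij j mem[of "2*j"] by simp
    show "WW A ts w0 d j + d j * rr A ts j \<in> E" using ij dj j mem[of "2*j+1"] by (simp add: rr_def)
  next
    show "WW A ts w0 d ?m \<in> E" using IH[of ?m] mem[of "2*?m"] by simp
    show "VV ts d ?m = (\<lambda>_. 0)" using IH[of ?m] lst l by (simp add: val_def)
  qed
  moreover have "WW A ts w0 d ?m = w1" using IH[of ?m] lst l by (simp add: en_def)
  ultimately show ?thesis by blast
qed



lemma construct_rel:
  assumes G: "Good A ts E w0 d"
    and path: "\<forall>j<length ts. ts!j \<in> trans A \<and> tr_src (ts!j) = ss!j \<and> tr_tgt (ts!j) = ss!Suc j"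
    and lenss: "length ss = Suc (length ts)"
  shows "energy_rel A ss E w0 (WW A ts w0 d (length ts))"
proof -
  let ?m = "length ts"
  define f where "f p = (ss!(p div 2),
      (if even p then VV ts d (p div 2) else (\<lambda>x. VV ts d (p div 2) x + d (p div 2))),
      (if even p then WW A ts w0 d (p div 2) else WW A ts w0 d (p div 2) + d (p div 2) * rr A ts (p div 2)))" for p
  define cs where "cs = map f [0..<2*?m+1]"
  have len: "length cs = 2 * ?m + 1" by (simp add: cs_def)
  have nth: "p < 2*?m+1 \<Longrightarrow> cs ! p = f p" for p by (simp add: cs_def del: upt_Suc)
  have G1: "\<And>j. j < ?m \<Longrightarrow> d j \<ge> 0
      \<and> sat (VV ts d j) (inv A (tr_src (ts!j)))
      \<and> sat (\<lambda>x. VV ts d j x + d j) (inv A (tr_src (ts!j)))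
      \<and> sat (\<lambda>x. VV ts d j x + d j) (tr_guard (ts!j))
      \<and> WW A ts w0 d j \<in> E \<and> WW A ts w0 d j + d j * rr A ts j \<in> E"
    and G2: "WW A ts w0 d ?m \<in> E" and G3: "VV ts d ?m = (\<lambda>_. 0)"
    using G unfolding Good_def by auto
  have run: "is_run A ts cs"
    unfolding is_run_def
  proof (intro conjI allI impI len)
    fix j assume j: "j < ?m"
    have c0: "cs ! (2*j) = (ss!j, VV ts d j, WW A ts w0 d j)" using j nth[of "2*j"] by (simp add: f_def)
    have c1: "cs ! (2*j+1) = (ss!j, (\<lambda>x. VV ts d j x + d j), WW A ts w0 d j + d j * rr A ts j)"
      using j nth[of "2*j+1"] by (simp add: f_def)
    have c2: "cs ! (2*j+2) = (ss!Suc j, VV ts d (Suc j), WW A ts w0 d (Suc j))"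
      using j nth[of "2*j+2"] by (simp add: f_def del: VV.simps WW.simps)
    show "ts ! j \<in> trans A" using path j by simp
    show "\<exists>d'::real. d' \<ge> 0 \<and>
           loc (cs ! (2*j)) = tr_src (ts ! j) \<and>
           loc (cs ! (2*j+1)) = tr_src (ts ! j) \<and>
           loc (cs ! (2*j+2)) = tr_tgt (ts ! j) \<and>
           val (cs ! (2*j+1)) = (\<lambda>x. val (cs ! (2*j)) x + d') \<and>
           val (cs ! (2*j+2)) = (\<lambda>x. if x \<in> tr_reset (ts ! j) then 0 else val (cs ! (2*j+1)) x) \<and>
           sat (val (cs ! (2*j))) (inv A (tr_src (ts ! j))) \<and>
           sat (val (cs ! (2*j+1))) (inv A (tr_src (ts ! j))) \<and>
           sat (val (cs ! (2*j+1))) (tr_guard (ts ! j)) \<and>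
           en (cs ! (2*j+1)) = en (cs ! (2*j)) + d' * real_of_rat (rate A (tr_src (ts ! j))) \<and>
           en (cs ! (2*j+2)) = en (cs ! (2*j+1)) + real_of_rat (tr_upd (ts ! j))"
      apply (rule exI[of _ "d j"])
      unfolding c0 c1 c2 using G1[OF j] path j
      by (auto simp add: loc_def val_def en_def rr_def uu_def fun_eq_iff)
  qed
  have sat: "run_satisfies cs E"
    unfolding run_satisfies_def
  proof
    fix c assume "c \<in> set cs"
    then obtain p where p: "p < 2*?m+1" "c = f p" unfolding cs_def by (auto simp del: upt_Suc)
    show "en c \<in> E"
    proof (cases "even p")
      case True
      then have "p div 2 \<le> ?m" using p by simp
      then have "WW A ts w0 d (p div 2) \<in> E"
        using G1 G2 by (cases "p div 2 = ?m") auto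
      then show ?thesis using p True by (simp add: f_def en_def)
    next
      case False
      then have "p div 2 < ?m" using p by presburger
      then show ?thesis using p False G1 by (simp add: f_def en_def)
    qed
  qed
  have hd: "hd cs = (hd ss, (\<lambda>_. 0), w0)"
    proof -
    have "ss \<noteq> []" using lenss by auto
    then have "ss ! 0 = hd ss" by (simp add: hd_conv_nth)
    then show ?thesis using nth[of 0] len by (cases cs) (auto simp: f_def)
  qed
  have lst: "last cs = (last ss, (\<lambda>_. 0), WW A ts w0 d ?m)"
  proof -
    have "last cs = cs ! (2*?m)" using len last_conv_nth[of cs] by (cases cs) auto
    also have "\<dots> = f (2*?m)" using nth by simp
    moreover have "ss ! ?m = last ss" using lenss last_conv_nth[of ss] by (cases ss) auto
    ultimately show ?thesis using G3 by (simp add: f_def)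
  qed
  have "w0 \<in> E" using G1[of 0] G2 by (cases "?m = 0") auto
  then show ?thesis unfolding energy_rel_def using run sat hd lst G2 by blast
qed

lemma path_struct:
  assumes E: "is_ETP A ss" and run: "is_run A ts cs"
    and h: "loc (hd cs) = hd ss" and l: "loc (last cs) = last ss"
  shows "length ss = Suc (length ts) \<and>
    (\<forall>j<length ts. ts!j \<in> trans A \<and> tr_src (ts!j) = ss!j \<and> tr_tgt (ts!j) = ss!Suc j)"
proof -
  let ?m = "length ts"
  have tr: "\<forall>t\<in>trans A. \<exists>i. Suc i < length ss \<and> tr_src t = ss ! i \<and> tr_tgt t = ss ! Suc i"
    and dist: "distinct ss" and ne: "ss \<noteq> []" using E unfolding is_ETP_def by auto
  have len: "length cs = 2 * ?m + 1" using run unfolding is_run_def by simp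
  have step: "j < ?m \<Longrightarrow> loc (cs!(2*j)) = tr_src (ts!j) \<and> loc (cs!(2*j+2)) = tr_tgt (ts!j) \<and> ts!j \<in> trans A" for j
    using run unfolding is_run_def by blast
  have gen: "tr_tgt (ts!j) = ss!Suc j \<and> Suc j < length ss"
    if "j < ?m" "tr_src (ts!j) = ss!j" "j < length ss" for j
  proof -
    from tr step[OF that(1)] obtain i where i: "Suc i < length ss" "tr_src (ts!j) = ss ! i" "tr_tgt (ts!j) = ss ! Suc i"
      by blast
    have "i = j" using i that dist nth_eq_iff_index_eq by (metis Suc_lessD)
    then show ?thesis using i by simp
  qed
  have cs0: "cs ! 0 = hd cs" using len by (cases cs) auto
  have P: "j < ?m \<Longrightarrow> tr_src (ts!j) = ss!j \<and> tr_tgt (ts!j) = ss!Suc j \<and> Suc j < length ss" for j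
  proof (induction j)
    case 0
    have "tr_src (ts!0) = ss!0" using step[OF 0] cs0 h ne by (simp add: hd_conv_nth)
    then show ?case using gen[OF 0] ne by simp
  next
    case (Suc j)
    then have IH: "tr_tgt (ts!j) = ss!Suc j" "Suc j < length ss" by auto
    have "tr_src (ts!Suc j) = ss!Suc j" using step[OF Suc.prems] step[of j] Suc.prems IH by simp
    then show ?case using gen[OF Suc.prems] IH by simp
  qed
  have lst: "cs ! (2*?m) = last cs" using len last_conv_nth[of cs] by (cases cs) auto
  have "length ss = Suc ?m"
  proof (cases "?m = 0")
    case True
    then have "hd ss = last ss" using h l lst cs0 by simp
    then have "ss ! 0 = ss ! (length ss - 1)" using ne by (simp add: hd_conv_nth last_conv_nth)
    then have "length ss - 1 = 0" using dist ne nth_eq_iff_index_eq by (metis diff_less length_greater_0_conv zero_less_one)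
    then show ?thesis using True ne by (cases ss) auto
  next
    case False
    then obtain k where k: "?m = Suc k" by (cases ?m) auto
    have Pk: "tr_tgt (ts!k) = ss!Suc k" "Suc k < length ss" using P[of k] k by auto
    have "loc (cs ! (2*k+2)) = tr_tgt (ts!k)" using step[of k] k by simp
    moreover have "2*k+2 = 2*?m" using k by simp
    ultimately have "ss ! Suc k = ss ! (length ss - 1)" using lst l Pk ne by (simp add: last_conv_nth)
    moreover have "length ss - 1 < length ss" using ne by simp
    ultimately have "Suc k = length ss - 1" using nth_eq_iff_index_eq[OF dist Pk(2), of "length ss - 1"] by simp
    then show ?thesis using k Pk by simp
  qed
  then show ?thesis using P step by auto
qed

lemma path_unique:
  assumes E: "is_ETP A ss"
    and p1: "length ss = Suc (length ts1) \<and>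
    (\<forall>j<length ts1. ts1!j \<in> trans A \<and> tr_src (ts1!j) = ss!j \<and> tr_tgt (ts1!j) = ss!Suc j)"
    and p2: "length ss = Suc (length ts2) \<and>
    (\<forall>j<length ts2. ts2!j \<in> trans A \<and> tr_src (ts2!j) = ss!j \<and> tr_tgt (ts2!j) = ss!Suc j)"
  shows "ts1 = ts2"
proof (rule nth_equalityI)
  show "length ts1 = length ts2" using p1 p2 by simp
  fix j assume j: "j < length ts1"
  have u: "\<exists>!t. t \<in> trans A \<and> tr_src t = ss ! j \<and> tr_tgt t = ss ! Suc j"
    using E j p1 unfolding is_ETP_def by auto
  have a: "ts1!j \<in> trans A \<and> tr_src (ts1!j) = ss!j \<and> tr_tgt (ts1!j) = ss!Suc j" using p1 j by auto
  have b: "ts2!j \<in> trans A \<and> tr_src (ts2!j) = ss!j \<and> tr_tgt (ts2!j) = ss!Suc j" using p1 p2 j by auto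
  show "ts1 ! j = ts2 ! j" using u a b unfolding Ex1_def by blast
qed



definition CS :: "('s,'c) eta \<Rightarrow> ('s,'c) tr list \<Rightarrow> 'c constr set" where
  "CS A ts = (\<Union>j\<in>{..<length ts}. set (inv A (tr_src (ts!j))) \<union> set (tr_guard (ts!j)))"

definition CM :: "('s,'c) eta \<Rightarrow> ('s,'c) tr list \<Rightarrow> real" where
  "CM A ts = Max (insert 0 ((\<lambda>a. \<bar>real_of_rat (snd (snd a))\<bar>) ` CS A ts))"

lemma CM_ge:
  assumes "a \<in> CS A ts" shows "\<bar>real_of_rat (snd (snd a))\<bar> \<le> CM A ts"
proof -
  have "finite (CS A ts)" unfolding CS_def by auto
  then show ?thesis unfolding CM_def using assms by (intro Max_ge) auto
qed

lemma CM_nonneg: "0 \<le> CM A ts"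
proof -
  have "finite (CS A ts)" unfolding CS_def by auto
  then show ?thesis unfolding CM_def by (intro Max_ge) auto
qed

definition cl :: "real \<Rightarrow> real \<Rightarrow> real \<Rightarrow> bool" where
  "cl M u u' \<longleftrightarrow> u = u' \<or> (M < u \<and> M < u')"

lemma sat_atom_cl:
  assumes "\<bar>real_of_rat (snd (snd a))\<bar> \<le> M" "cl M (v (fst a)) (v' (fst a))"
  shows "sat_atom v a \<longleftrightarrow> sat_atom v' a"
proof -
  obtain x k c where a: "a = (x,k,c)" by (cases a) auto
  have "\<bar>real_of_rat c\<bar> \<le> M" using assms(1) a by simp
  then have c1: "real_of_rat c \<le> M" "- M \<le> real_of_rat c" by linarith+
  show ?thesis using assms(2) c1 unfolding a cl_def by (cases k) auto
qed

lemma sat_cl: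
  assumes "\<forall>a\<in>set gs. \<bar>real_of_rat (snd (snd a))\<bar> \<le> M" "\<forall>x. cl M (v x) (v' x)"
  shows "sat v gs \<longleftrightarrow> sat v' gs"
  unfolding sat_def using sat_atom_cl assms by blast

lemma cl_add:
  assumes "cl M u u'" "0 \<le> u" "0 \<le> u'" "0 \<le> e" "e' = e \<or> (M < e \<and> M < e')"
  shows "cl M (u + e) (u' + e')"
  using assms unfolding cl_def by auto

definition capd :: "('s,'c) eta \<Rightarrow> ('s,'c) tr list \<Rightarrow> real \<Rightarrow> (nat \<Rightarrow> real) \<Rightarrow> nat \<Rightarrow> real" where
  "capd A ts M d j = (if rr A ts j = 0 then min (d j) (M + 1) else d j)"

lemma VV_nonneg: "(\<And>i. i < j \<Longrightarrow> 0 \<le> d i) \<Longrightarrow> 0 \<le> VV ts d j x"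
  by (induction j) auto

lemma WW_capd: "WW A ts w0 (capd A ts M d) j = WW A ts w0 d j"
  by (induction j) (auto simp: capd_def)

lemma cap_good:
  assumes G: "Good A ts {lo..hi} w0 d"
  defines "M \<equiv> CM A ts"
  shows "Good A ts {lo..hi} w0 (capd A ts M d)
    \<and> (\<forall>j<length ts. \<bar>capd A ts M d j\<bar> \<le> M + 1 + \<bar>hi - lo\<bar> / \<bar>rr A ts j\<bar>)"
proof -
  let ?m = "length ts"
  let ?d' = "capd A ts M d"
  have G1: "\<And>j. j < ?m \<Longrightarrow> d j \<ge> 0
      \<and> sat (VV ts d j) (inv A (tr_src (ts!j)))
      \<and> sat (\<lambda>x. VV ts d j x + d j) (inv A (tr_src (ts!j)))
      \<and> sat (\<lambda>x. VV ts d j x + d j) (tr_guard (ts!j))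
      \<and> WW A ts w0 d j \<in> {lo..hi} \<and> WW A ts w0 d j + d j * rr A ts j \<in> {lo..hi}"
    and G2: "WW A ts w0 d ?m \<in> {lo..hi}" and G3: "VV ts d ?m = (\<lambda>_. 0)"
    using G unfolding Good_def by auto
  have M0: "0 \<le> M" unfolding M_def by (rule CM_nonneg)
  have dnn: "j < ?m \<Longrightarrow> 0 \<le> d j" for j using G1 by auto
  have d'nn: "j < ?m \<Longrightarrow> 0 \<le> ?d' j" for j using dnn M0 by (auto simp: capd_def)
  have ee: "j < ?m \<Longrightarrow> ?d' j = d j \<or> (M < d j \<and> M < ?d' j)" for j
    by (auto simp: capd_def)
  have clV: "j \<le> ?m \<Longrightarrow> cl M (VV ts d j x) (VV ts ?d' j x)" for j x
  proof (induction j)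
    case 0 then show ?case by (simp add: cl_def)
  next
    case (Suc j)
    then have j: "j < ?m" by simp
    have "cl M (VV ts d j x + d j) (VV ts ?d' j x + ?d' j)"
      apply (rule cl_add)
      using Suc j dnn d'nn ee[OF j] by (auto intro!: VV_nonneg)
    then show ?case by (simp add: cl_def)
  qed
  have clV1: "j < ?m \<Longrightarrow> cl M (VV ts d j x + d j) (VV ts ?d' j x + ?d' j)" for j x
    apply (rule cl_add)
    using clV[of j x] dnn d'nn ee[of j] by (auto intro!: VV_nonneg)
  have bnd: "\<forall>a\<in>set (inv A (tr_src (ts!j))). \<bar>real_of_rat (snd (snd a))\<bar> \<le> M"
     "\<forall>a\<in>set (tr_guard (ts!j)). \<bar>real_of_rat (snd (snd a))\<bar> \<le> M" if "j < ?m" for j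
  proof -
    have "a \<in> CS A ts" if "a \<in> set (inv A (tr_src (ts!j))) \<or> a \<in> set (tr_guard (ts!j))" for a
      using that \<open>j < ?m\<close> unfolding CS_def by blast
    then show "\<forall>a\<in>set (inv A (tr_src (ts!j))). \<bar>real_of_rat (snd (snd a))\<bar> \<le> M"
     "\<forall>a\<in>set (tr_guard (ts!j)). \<bar>real_of_rat (snd (snd a))\<bar> \<le> M"
      unfolding M_def using CM_ge by blast+
  qed
  have "Good A ts {lo..hi} w0 ?d'"
    unfolding Good_def WW_capd
  proof (intro conjI allI impI)
    fix j assume j: "j < ?m"
    show "0 \<le> ?d' j" using d'nn j .
    show "sat (VV ts ?d' j) (inv A (tr_src (ts!j)))"
      using G1[OF j] sat_cl[OF bnd(1)[OF j], of "VV ts d j" "VV ts ?d' j"] clV[of j] j by simp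
    show "sat (\<lambda>x. VV ts ?d' j x + ?d' j) (inv A (tr_src (ts!j)))"
      using G1[OF j] sat_cl[OF bnd(1)[OF j], of "\<lambda>x. VV ts d j x + d j" "\<lambda>x. VV ts ?d' j x + ?d' j"] clV1[OF j] by simp
    show "sat (\<lambda>x. VV ts ?d' j x + ?d' j) (tr_guard (ts!j))"
      using G1[OF j] sat_cl[OF bnd(2)[OF j], of "\<lambda>x. VV ts d j x + d j" "\<lambda>x. VV ts ?d' j x + ?d' j"] clV1[OF j] by simp
    show "WW A ts w0 d j \<in> {lo..hi}" using G1[OF j] by simp
    have "?d' j * rr A ts j = d j * rr A ts j" by (simp add: capd_def)
    then show "WW A ts w0 d j + ?d' j * rr A ts j \<in> {lo..hi}" using G1[OF j] by (simp only:)
  next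
    show "WW A ts w0 d ?m \<in> {lo..hi}" using G2 .
    show "VV ts ?d' ?m = (\<lambda>_. 0)"
    proof
      fix x
      have "cl M 0 (VV ts ?d' ?m x)" using clV[of ?m x] G3 by (simp add: fun_eq_iff)
      then show "VV ts ?d' ?m x = 0" using M0 unfolding cl_def by auto
    qed
  qed
  moreover have "\<bar>?d' j\<bar> \<le> M + 1 + \<bar>hi - lo\<bar> / \<bar>rr A ts j\<bar>" if j: "j < ?m" for j
  proof (cases "rr A ts j = 0")
    case True
    then have "\<bar>?d' j\<bar> \<le> M + 1" using d'nn[OF j] by (simp add: capd_def)
    then show ?thesis using True by simp
  next
    case False
    let ?r = "rr A ts j"
    have h: "lo \<le> WW A ts w0 d j" "WW A ts w0 d j \<le> hi" "lo \<le> WW A ts w0 d j + d j * ?r" "WW A ts w0 d j + d j * ?r \<le> hi"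
      using G1[OF j] by auto
    have "\<bar>d j * ?r\<bar> \<le> \<bar>hi - lo\<bar>" using h by linarith
    then have "d j * \<bar>?r\<bar> \<le> \<bar>hi - lo\<bar>" using dnn[OF j] by (simp add: abs_mult)
    then have "d j \<le> \<bar>hi - lo\<bar> / \<bar>?r\<bar>" using False by (simp add: le_divide_eq)
    then show ?thesis using False dnn[OF j] M0 by (simp add: capd_def)
  qed
  ultimately show ?thesis by blast
qed



lemma multi_subseq:
  fixes D :: "nat \<Rightarrow> nat \<Rightarrow> real"
  assumes "\<forall>j<m. \<exists>B. \<forall>k. \<bar>D k j\<bar> \<le> B"
  shows "\<exists>r. strict_mono r \<and> (\<forall>j<m. \<exists>l. (\<lambda>k. D (r k) j) \<longlonglongrightarrow> l)"
  using assms
proof (induction m)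
  case 0
  show ?case by (rule exI[of _ id]) (simp add: strict_mono_def)
next
  case (Suc m)
  then obtain r where r: "strict_mono r" "\<forall>j<m. \<exists>l. (\<lambda>k. D (r k) j) \<longlonglongrightarrow> l" by auto
  obtain B where B: "\<forall>k. \<bar>D k m\<bar> \<le> B" using Suc.prems by auto
  have "bounded (range (\<lambda>k. D (r k) m))" unfolding bounded_real using B by auto
  then obtain l r' where r': "strict_mono r'" "((\<lambda>k. D (r k) m) \<circ> r') \<longlonglongrightarrow> l"
    using bounded_imp_convergent_subsequence by blast
  have "\<forall>j<Suc m. \<exists>l. (\<lambda>k. D ((r \<circ> r') k) j) \<longlonglongrightarrow> l"
  proof (intro allI impI)
    fix j assume j: "j < Suc m"
    show "\<exists>l. (\<lambda>k. D ((r \<circ> r') k) j) \<longlonglongrightarrow> l"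
    proof (cases "j = m")
      case True then show ?thesis using r' by (auto simp: o_def)
    next
      case False
      then have "j < m" using j by simp
      then obtain l' where "(\<lambda>k. D (r k) j) \<longlonglongrightarrow> l'" using r(2) by blast
      from LIMSEQ_subseq_LIMSEQ[OF this r'(1)] show ?thesis by (auto simp: o_def)
    qed
  qed
  moreover have "strict_mono (r \<circ> r')" using r(1) r'(1) by (rule strict_mono_o)
  ultimately show ?case by blast
qed

lemma sat_lim:
  assumes "\<forall>k. sat (v k) gs" "\<forall>x. (\<lambda>k. v k x) \<longlonglongrightarrow> u x"
  shows "sat u gs"
  unfolding sat_def
proof
  fix a assume a: "a \<in> set gs"
  obtain x t c where ac: "a = (x,t,c)" by (cases a) auto
  have all: "\<forall>k. sat_atom (v k) (x,t,c)" using assms(1) a ac unfolding sat_def by auto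
  have lim: "(\<lambda>k. v k x) \<longlonglongrightarrow> u x" using assms(2) by auto
  show "sat_atom u a" unfolding ac
  proof (cases t)
    case CLe then show "sat_atom u (x,t,c)" using all by (auto intro!: LIMSEQ_le_const2[OF lim])
  next
    case CGe then show "sat_atom u (x,t,c)" using all by (auto intro!: LIMSEQ_le_const[OF lim])
  next
    case CEq
    then have "(\<lambda>k. v k x) = (\<lambda>k. real_of_rat c)" using all by auto
    then have "(\<lambda>k. real_of_rat c) \<longlonglongrightarrow> u x" using lim by simp
    then have "u x = real_of_rat c" using LIMSEQ_unique tendsto_const by blast
    then show "sat_atom u (x,t,c)" using CEq by simp
  qed
qed

lemma Icc_lim:
  fixes f :: "nat \<Rightarrow> real"
  assumes "\<forall>k. f k \<in> {lo..hi}" "f \<longlonglongrightarrow> l" shows "l \<in> {lo..hi}"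
  using assms by (auto intro!: LIMSEQ_le_const[OF assms(2)] LIMSEQ_le_const2[OF assms(2)])

lemma limit_good:
  assumes G: "\<forall>k. Good A ts {lo..hi} (w k) (D k)"
    and dl: "\<forall>j<length ts. (\<lambda>k. D k j) \<longlonglongrightarrow> dl j"
    and w: "w \<longlonglongrightarrow> w0"
  shows "Good A ts {lo..hi} w0 dl \<and> (\<lambda>k. WW A ts (w k) (D k) (length ts)) \<longlonglongrightarrow> WW A ts w0 dl (length ts)"
proof -
  let ?m = "length ts"
  have G1: "\<And>j k. j < ?m \<Longrightarrow> D k j \<ge> 0
      \<and> sat (VV ts (D k) j) (inv A (tr_src (ts!j)))
      \<and> sat (\<lambda>x. VV ts (D k) j x + D k j) (inv A (tr_src (ts!j)))
      \<and> sat (\<lambda>x. VV ts (D k) j x + D k j) (tr_guard (ts!j))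
      \<and> WW A ts (w k) (D k) j \<in> {lo..hi} \<and> WW A ts (w k) (D k) j + D k j * rr A ts j \<in> {lo..hi}"
    and G2: "\<And>k. WW A ts (w k) (D k) ?m \<in> {lo..hi}" and G3: "\<And>k. VV ts (D k) ?m = (\<lambda>_. 0)"
    using G unfolding Good_def by auto
  have VL: "j \<le> ?m \<Longrightarrow> (\<lambda>k. VV ts (D k) j x) \<longlonglongrightarrow> VV ts dl j x" for j x
  proof (induction j)
    case 0 then show ?case by simp
  next
    case (Suc j)
    then have j: "j < ?m" by simp
    show ?case
    proof (cases "x \<in> tr_reset (ts!j)")
      case True then show ?thesis by simp
    next
      case False
      have "(\<lambda>k. VV ts (D k) j x + D k j) \<longlonglongrightarrow> VV ts dl j x + dl j"
        using Suc.IH[OF Suc_leD[OF Suc.prems]] dl j by (intro tendsto_add) auto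
      then show ?thesis using False by simp
    qed
  qed
  have VL1: "j < ?m \<Longrightarrow> (\<lambda>k. VV ts (D k) j x + D k j) \<longlonglongrightarrow> VV ts dl j x + dl j" for j x
    using VL[of j x] dl by (intro tendsto_add) auto
  have WL: "j \<le> ?m \<Longrightarrow> (\<lambda>k. WW A ts (w k) (D k) j) \<longlonglongrightarrow> WW A ts w0 dl j" for j
  proof (induction j)
    case 0 then show ?case using w by simp
  next
    case (Suc j)
    then have j: "j < ?m" by simp
    have "(\<lambda>k. WW A ts (w k) (D k) j + D k j * rr A ts j + uu ts j) \<longlonglongrightarrow> WW A ts w0 dl j + dl j * rr A ts j + uu ts j"
      using Suc.IH[OF Suc_leD[OF Suc.prems]] dl j by (intro tendsto_add tendsto_mult tendsto_const) auto
    then show ?case by simp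
  qed
  have WL1: "j < ?m \<Longrightarrow> (\<lambda>k. WW A ts (w k) (D k) j + D k j * rr A ts j) \<longlonglongrightarrow> WW A ts w0 dl j + dl j * rr A ts j" for j
    using WL[of j] dl by (intro tendsto_add tendsto_mult tendsto_const) auto
  have "Good A ts {lo..hi} w0 dl"
    unfolding Good_def
  proof (intro conjI allI impI)
    fix j assume j: "j < ?m"
    have "(\<lambda>k. D k j) \<longlonglongrightarrow> dl j" using dl j by simp
    then show "0 \<le> dl j" by (rule LIMSEQ_le_const) (use G1[OF j] in auto)
    have a1: "\<forall>k. sat (VV ts (D k) j) (inv A (tr_src (ts!j)))" using G1[OF j] by blast
    have a2: "\<forall>x. (\<lambda>k. VV ts (D k) j x) \<longlonglongrightarrow> VV ts dl j x" using VL j by simp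
    show "sat (VV ts dl j) (inv A (tr_src (ts!j)))" using sat_lim[OF a1 a2] .
    have b1: "\<forall>k. sat (\<lambda>x. VV ts (D k) j x + D k j) (inv A (tr_src (ts!j)))" using G1[OF j] by blast
    have b3: "\<forall>k. sat (\<lambda>x. VV ts (D k) j x + D k j) (tr_guard (ts!j))" using G1[OF j] by blast
    have b2: "\<forall>x. (\<lambda>k. VV ts (D k) j x + D k j) \<longlonglongrightarrow> VV ts dl j x + dl j" using VL1 j by simp
    show "sat (\<lambda>x. VV ts dl j x + dl j) (inv A (tr_src (ts!j)))"
      using sat_lim[of "\<lambda>k x. VV ts (D k) j x + D k j", OF b1 b2] by simp
    show "sat (\<lambda>x. VV ts dl j x + dl j) (tr_guard (ts!j))"
      using sat_lim[of "\<lambda>k x. VV ts (D k) j x + D k j", OF b3 b2] by simp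
    show "WW A ts w0 dl j \<in> {lo..hi}"
      using G1[OF j] WL[of j] j by (intro Icc_lim[where f = "\<lambda>k. WW A ts (w k) (D k) j"]) auto
    show "WW A ts w0 dl j + dl j * rr A ts j \<in> {lo..hi}"
      using G1[OF j] WL1[OF j] by (intro Icc_lim[where f = "\<lambda>k. WW A ts (w k) (D k) j + D k j * rr A ts j"]) auto
  next
    show "WW A ts w0 dl ?m \<in> {lo..hi}"
      using G2 WL[of ?m] by (intro Icc_lim[where f = "\<lambda>k. WW A ts (w k) (D k) ?m"]) auto
    show "VV ts dl ?m = (\<lambda>_. 0)"
    proof
      fix x
      have "(\<lambda>k. VV ts (D k) ?m x) \<longlonglongrightarrow> VV ts dl ?m x" using VL by simp
      then have "(\<lambda>k. 0::real) \<longlonglongrightarrow> VV ts dl ?m x" using G3 by simp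
      then show "VV ts dl ?m x = 0" using LIMSEQ_unique tendsto_const by blast
    qed
  qed
  then show ?thesis using WL by simp
qed



definition pathP :: "('s,'c) eta \<Rightarrow> 's list \<Rightarrow> ('s,'c) tr list \<Rightarrow> bool" where
  "pathP A ss ts \<longleftrightarrow> length ss = Suc (length ts) \<and>
    (\<forall>j<length ts. ts!j \<in> trans A \<and> tr_src (ts!j) = ss!j \<and> tr_tgt (ts!j) = ss!Suc j)"

lemma rel_path:
  assumes ETP: "is_ETP A ss" and R: "energy_rel A ss E w0 w1"
  shows "\<exists>ts. pathP A ss ts"
proof -
  from R obtain ts cs where "is_run A ts cs" "hd cs = (hd ss, (\<lambda>_. 0), w0)" "last cs = (last ss, (\<lambda>_. 0), w1)"
    unfolding energy_rel_def by blast
  then have "pathP A ss ts" unfolding pathP_def using path_struct[OF ETP] by (simp add: loc_def)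
  then show ?thesis by blast
qed

lemma rel_good:
  assumes ETP: "is_ETP A ss" and R: "energy_rel A ss E w0 w1" and P: "pathP A ss ts"
  shows "\<exists>d. Good A ts E w0 d \<and> WW A ts w0 d (length ts) = w1"
proof -
  from R obtain ts' cs where c: "is_run A ts' cs" "run_satisfies cs E"
    "hd cs = (hd ss, (\<lambda>_. 0), w0)" "last cs = (last ss, (\<lambda>_. 0), w1)"
    unfolding energy_rel_def by blast
  then have "pathP A ss ts'" unfolding pathP_def using path_struct[OF ETP] by (simp add: loc_def)
  then have "ts' = ts" using path_unique[OF ETP] P unfolding pathP_def by blast
  then show ?thesis using extract_good[OF c] by simp
qed

lemma key:
  assumes ETP: "is_ETP A ss" and R: "\<forall>k. energy_rel A ss {lo..hi} (w k) (v k)"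
    and w: "w \<longlonglongrightarrow> w0" and v: "v \<longlonglongrightarrow> v0"
  shows "energy_rel A ss {lo..hi} w0 v0"
proof -
  obtain ts where P: "pathP A ss ts" using rel_path[OF ETP spec[OF R, of 0]] by blast
  let ?m = "length ts"
  have "\<forall>k. \<exists>d. Good A ts {lo..hi} (w k) d \<and> WW A ts (w k) d ?m = v k"
    using rel_good[OF ETP spec[OF R] P] by blast
  then have "\<exists>D. \<forall>k. Good A ts {lo..hi} (w k) (D k) \<and> WW A ts (w k) (D k) ?m = v k"
    by (rule choice)
  then obtain D where D: "\<forall>k. Good A ts {lo..hi} (w k) (D k) \<and> WW A ts (w k) (D k) ?m = v k" by blast
  define M where "M = CM A ts"
  define D' where "D' k = capd A ts M (D k)" for k
  have D'g: "\<forall>k. Good A ts {lo..hi} (w k) (D' k)"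
    and D'b: "\<forall>k. \<forall>j<?m. \<bar>D' k j\<bar> \<le> M + 1 + \<bar>hi - lo\<bar> / \<bar>rr A ts j\<bar>"
  proof -
    have "Good A ts {lo..hi} (w k) (D' k) \<and> (\<forall>j<?m. \<bar>D' k j\<bar> \<le> M + 1 + \<bar>hi - lo\<bar> / \<bar>rr A ts j\<bar>)" for k
      using cap_good[of A ts lo hi "w k" "D k"] D unfolding D'_def M_def by simp
    then show "\<forall>k. Good A ts {lo..hi} (w k) (D' k)"
      "\<forall>k. \<forall>j<?m. \<bar>D' k j\<bar> \<le> M + 1 + \<bar>hi - lo\<bar> / \<bar>rr A ts j\<bar>" by simp_all
  qed
  have D'w: "\<forall>k. WW A ts (w k) (D' k) ?m = v k" using D unfolding D'_def by (simp add: WW_capd)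
  have "\<forall>j<?m. \<exists>B. \<forall>k. \<bar>D' k j\<bar> \<le> B"
  proof (intro allI impI)
    fix j assume "j < ?m"
    then show "\<exists>B. \<forall>k. \<bar>D' k j\<bar> \<le> B" using D'b by (intro exI[of _ "M + 1 + \<bar>hi - lo\<bar> / \<bar>rr A ts j\<bar>"]) simp
  qed
  from multi_subseq[OF this] obtain r where r: "strict_mono r"
    "\<forall>j<?m. \<exists>l. (\<lambda>k. D' (r k) j) \<longlonglongrightarrow> l" by blast
  have "\<forall>j\<in>{..<?m}. \<exists>l. (\<lambda>k. D' (r k) j) \<longlonglongrightarrow> l" using r(2) by blast
  then have "\<exists>dl. \<forall>j\<in>{..<?m}. (\<lambda>k. D' (r k) j) \<longlonglongrightarrow> dl j" by (rule bchoice)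
  then obtain dl where dl: "\<forall>j<?m. (\<lambda>k. D' (r k) j) \<longlonglongrightarrow> dl j" by auto
  have wr: "(\<lambda>k. w (r k)) \<longlonglongrightarrow> w0" using LIMSEQ_subseq_LIMSEQ[OF w r(1)] by (simp add: o_def)
  have vr: "(\<lambda>k. v (r k)) \<longlonglongrightarrow> v0" using LIMSEQ_subseq_LIMSEQ[OF v r(1)] by (simp add: o_def)
  have Gr: "\<forall>k. Good A ts {lo..hi} (w (r k)) (D' (r k))" using D'g by blast
  from limit_good[OF Gr dl wr] have L: "Good A ts {lo..hi} w0 dl"
    "(\<lambda>k. WW A ts (w (r k)) (D' (r k)) ?m) \<longlonglongrightarrow> WW A ts w0 dl ?m" by auto
  from L(2) have "(\<lambda>k. v (r k)) \<longlonglongrightarrow> WW A ts w0 dl ?m" using D'w by simp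
  then have "WW A ts w0 dl ?m = v0" using vr LIMSEQ_unique by blast
  then show ?thesis using construct_rel[OF L(1)] P unfolding pathP_def by auto
qed

lemma conv_subseq:
  fixes v :: "nat \<Rightarrow> real"
  assumes "\<forall>k. v k \<in> {lo..hi}"
  shows "\<exists>r x. strict_mono r \<and> (\<lambda>k. v (r k)) \<longlonglongrightarrow> x"
proof -
  have "bounded (range v)" unfolding bounded_real
  proof (intro exI[of _ "\<bar>lo\<bar> + \<bar>hi\<bar>"] ballI)
    fix y assume "y \<in> range v"
    then obtain k where "y = v k" by blast
    then have "lo \<le> y" "y \<le> hi" using assms by auto
    then show "\<bar>y\<bar> \<le> \<bar>lo\<bar> + \<bar>hi\<bar>" using abs_ge_self[of lo] abs_ge_self[of hi] abs_ge_minus_self[of lo] abs_ge_minus_self[of hi]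
      by (simp add: abs_le_iff)
  qed
  from bounded_imp_convergent_subsequence[OF this] show ?thesis by (auto simp: o_def)
qed

lemma nested_lim:
  fixes v :: "nat \<Rightarrow> real"
  assumes I: "\<forall>j. \<exists>l u. I j = {l..u}" and dec: "\<forall>j. I (Suc j) \<subseteq> I j"
    and vI: "\<forall>k. v k \<in> I k" and r: "strict_mono r" and lim: "(\<lambda>k. v (r k)) \<longlonglongrightarrow> x"
  shows "x \<in> (\<Inter>j. I j)"
proof -
  have "x \<in> I j" for j
  proof -
  obtain l u where lu: "I j = {l..u}" using I by blast
  have sub: "k \<ge> j \<Longrightarrow> v (r k) \<in> I j" for k
  proof -
    assume "k \<ge> j"
    then have "j \<le> r k" using seq_suble[OF r, of k] by simp
    have "\<And>n. I (Suc n) \<subseteq> I n" using dec by blast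
    from lift_Suc_antimono_le[of I, OF this \<open>j \<le> r k\<close>] have "I (r k) \<subseteq> I j" .
    then show ?thesis using vI by blast
  qed
  have h1: "\<forall>n\<ge>j. l \<le> v (r n)" using sub lu by auto
  have h2: "\<forall>n\<ge>j. v (r n) \<le> u" using sub lu by auto
  have "l \<le> x" using h1 by (intro LIMSEQ_le_const[OF lim] exI[of _ j])
  moreover have "x \<le> u" using h2 by (intro LIMSEQ_le_const2[OF lim] exI[of _ j])
  ultimately show "x \<in> I j" using lu by simp
  qed
  then show ?thesis by blast
qed

theorem mainTheorem1:
  fixes A :: "('s, 'c) eta" and ss :: "'s list" and a b :: rat
    and I :: "nat \<Rightarrow> real set"
  assumes "is_ETP A ss"
    and "\<forall>j. I j \<in> closed_subintervals {real_of_rat a .. real_of_rat b}"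
    and "\<forall>j. I (Suc j) \<subseteq> I j"
  shows "energy_preimg A ss {real_of_rat a .. real_of_rat b} (\<Inter>j. I j)
           = (\<Inter>j. energy_preimg A ss {real_of_rat a .. real_of_rat b} (I j))
       \<and> energy_img A ss {real_of_rat a .. real_of_rat b} (\<Inter>j. I j)
           = (\<Inter>j. energy_img A ss {real_of_rat a .. real_of_rat b} (I j))"
proof -
  let ?E = "{real_of_rat a .. real_of_rat b}"
  have ETP: "is_ETP A ss" using assms(1) .
  have Isub: "\<forall>j. I j \<subseteq> ?E" and Iint: "\<forall>j. \<exists>l u. I j = {l..u}"
    using assms(2) unfolding closed_subintervals_def by auto
  have dec: "\<forall>j. I (Suc j) \<subseteq> I j" using assms(3) .
  have relE: "energy_rel A ss ?E x y \<Longrightarrow> x \<in> ?E \<and> y \<in> ?E" for x y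
    unfolding energy_rel_def by blast
  have P1: "energy_preimg A ss ?E (\<Inter>j. I j) = (\<Inter>j. energy_preimg A ss ?E (I j))"
  proof
    show "energy_preimg A ss ?E (\<Inter>j. I j) \<subseteq> (\<Inter>j. energy_preimg A ss ?E (I j))"
      unfolding energy_preimg_def by blast
    show "(\<Inter>j. energy_preimg A ss ?E (I j)) \<subseteq> energy_preimg A ss ?E (\<Inter>j. I j)"
    proof
      fix w0 assume w0: "w0 \<in> (\<Inter>j. energy_preimg A ss ?E (I j))"
      then have "\<forall>j. \<exists>w1. w1 \<in> I j \<and> energy_rel A ss ?E w0 w1"
        unfolding energy_preimg_def by blast
      then have "\<exists>v. \<forall>j. v j \<in> I j \<and> energy_rel A ss ?E w0 (v j)" by (rule choice)
      then obtain v where v: "\<forall>j. v j \<in> I j \<and> energy_rel A ss ?E w0 (v j)" by blast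
      have "\<forall>k. v k \<in> ?E" using v relE by blast
      from conv_subseq[OF this] obtain r x where r: "strict_mono r" "(\<lambda>k. v (r k)) \<longlonglongrightarrow> x" by blast
      have "\<forall>k. v k \<in> I k" using v by simp
      from nested_lim[OF Iint dec this r] have xI: "x \<in> (\<Inter>j. I j)" .
      have "\<forall>k. energy_rel A ss ?E ((\<lambda>_. w0) k) (v (r k))" using v by simp
      from key[OF ETP this tendsto_const r(2)] have "energy_rel A ss ?E w0 x" .
      then show "w0 \<in> energy_preimg A ss ?E (\<Inter>j. I j)"
        unfolding energy_preimg_def using xI relE by blast
    qed
  qed
  have P2: "energy_img A ss ?E (\<Inter>j. I j) = (\<Inter>j. energy_img A ss ?E (I j))"
  proof
    show "energy_img A ss ?E (\<Inter>j. I j) \<subseteq> (\<Inter>j. energy_img A ss ?E (I j))"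
      unfolding energy_img_def by blast
    show "(\<Inter>j. energy_img A ss ?E (I j)) \<subseteq> energy_img A ss ?E (\<Inter>j. I j)"
    proof
      fix w1 assume w1: "w1 \<in> (\<Inter>j. energy_img A ss ?E (I j))"
      then have "\<forall>j. \<exists>w0. w0 \<in> I j \<and> energy_rel A ss ?E w0 w1"
        unfolding energy_img_def by blast
      then have "\<exists>v. \<forall>j. v j \<in> I j \<and> energy_rel A ss ?E (v j) w1" by (rule choice)
      then obtain v where v: "\<forall>j. v j \<in> I j \<and> energy_rel A ss ?E (v j) w1" by blast
      have "\<forall>k. v k \<in> ?E" using v relE by blast
      from conv_subseq[OF this] obtain r x where r: "strict_mono r" "(\<lambda>k. v (r k)) \<longlonglongrightarrow> x" by blast
      have "\<forall>k. v k \<in> I k" using v by simp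
      from nested_lim[OF Iint dec this r] have xI: "x \<in> (\<Inter>j. I j)" .
      have "\<forall>k. energy_rel A ss ?E (v (r k)) ((\<lambda>_. w1) k)" using v by simp
      from key[OF ETP this r(2) tendsto_const] have "energy_rel A ss ?E x w1" .
      then show "w1 \<in> energy_img A ss ?E (\<Inter>j. I j)"
        unfolding energy_img_def using xI relE by blast
    qed
  qed
  show ?thesis using P1 P2 by blast
qed


end
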